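(* Let $G$ be a finite simple graph without isolated vertices that contains exactly two odd cycles. Then $G$ is $(3,2)$-critical if and only if $G\in\mathcal A\cup\mathcal B$, where $\mathcal A=\{C_{2k+1}+C_{2\ell+1} : k,\ell\ge1\}$ ($+$ denotes disjoint union) and $\mathcal B$ is the family of graphs obtained from $C_{2k+1}+C_{2\ell+1}$, $k,\ell\ge1$, by identifying a vertex of $C_{2k+1}$ with a vertex of $C_{2\ell+1}$.
   Context: An odd cycle is a cycle (subgraph) of odd length. For a graph $G$, ${\rm es}_{\chi}(G)$ is the minimum number of edges of $G$ whose removal results in a spanning subgraph $G_1$ with $\chi(G_1)=\chi(G)-1$. $G$ is edge-stability critical if ${\rm es}_{\chi}(G-e)<{\rm es}_{\chi}(G)$ for every edge $e$. $G$ is $(3,2)$-critical if it is edge-stability critical with $\chi(G)=3$ and ${\rm es}_{\chi}(G)=2$. *)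

theory Defs
  imports Main
begin

definition simple_graph :: "'a set \<Rightarrow> 'a set set \<Rightarrow> bool" where
  "simple_graph V E \<longleftrightarrow> finite V \<and> (\<forall>e\<in>E. \<exists>u v. e = {u, v} \<and> u \<noteq> v \<and> u \<in> V \<and> v \<in> V)"

definition no_isolated_vertices :: "'a set \<Rightarrow> 'a set set \<Rightarrow> bool" where
  "no_isolated_vertices V E \<longleftrightarrow> (\<forall>v\<in>V. \<exists>e\<in>E. v \<in> e)"

definition cyc_edges :: "'a list \<Rightarrow> 'a set set" where
  "cyc_edges xs = {{xs ! i, xs ! ((i + 1) mod length xs)} | i. i < length xs}"

definition cycle_list :: "'a list \<Rightarrow> bool" where
  "cycle_list xs \<longleftrightarrow> distinct xs \<and> length xs \<ge> 3"

text \<open>The odd cycles (as subgraphs, identified by their edge sets) of G.\<close>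
definition odd_cycles :: "'a set \<Rightarrow> 'a set set \<Rightarrow> 'a set set set" where
  "odd_cycles V E = {C. \<exists>xs. cycle_list xs \<and> odd (length xs) \<and> set xs \<subseteq> V
                         \<and> C = cyc_edges xs \<and> C \<subseteq> E}"

definition colorable :: "'a set \<Rightarrow> 'a set set \<Rightarrow> nat \<Rightarrow> bool" where
  "colorable V E k \<longleftrightarrow> (\<exists>f :: 'a \<Rightarrow> nat. (\<forall>v\<in>V. f v < k) \<and> (\<forall>u v. {u, v} \<in> E \<longrightarrow> f u \<noteq> f v))"

definition chi :: "'a set \<Rightarrow> 'a set set \<Rightarrow> nat" where
  "chi V E = (LEAST k. colorable V E k)"

definition es_chi :: "'a set \<Rightarrow> 'a set set \<Rightarrow> nat" where
  "es_chi V E = (LEAST k. \<exists>F \<subseteq> E. card F = k \<and> chi V (E - F) = chi V E - 1)"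

definition edge_stability_critical :: "'a set \<Rightarrow> 'a set set \<Rightarrow> bool" where
  "edge_stability_critical V E \<longleftrightarrow> (\<forall>e\<in>E. es_chi V (E - {e}) < es_chi V E)"

definition critical_3_2 :: "'a set \<Rightarrow> 'a set set \<Rightarrow> bool" where
  "critical_3_2 V E \<longleftrightarrow> edge_stability_critical V E \<and> chi V E = 3 \<and> es_chi V E = 2"

definition family_A :: "'a set \<Rightarrow> 'a set set \<Rightarrow> bool" where
  "family_A V E \<longleftrightarrow> (\<exists>xs ys. cycle_list xs \<and> cycle_list ys \<and> odd (length xs) \<and> odd (length ys)
     \<and> set xs \<inter> set ys = {} \<and> V = set xs \<union> set ys \<and> E = cyc_edges xs \<union> cyc_edges ys)"

definition family_B :: "'a set \<Rightarrow> 'a set set \<Rightarrow> bool" where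
  "family_B V E \<longleftrightarrow> (\<exists>xs ys x. cycle_list xs \<and> cycle_list ys \<and> odd (length xs) \<and> odd (length ys)
     \<and> set xs \<inter> set ys = {x} \<and> V = set xs \<union> set ys \<and> E = cyc_edges xs \<union> cyc_edges ys)"

end

theory Submission
  imports Defs
begin


lemma edge_props:
  assumes "simple_graph V E" "{u,v} \<in> E" shows "u \<noteq> v \<and> u \<in> V \<and> v \<in> V"
proof -
  obtain a b where "{u,v} = {a,b}" "a \<noteq> b" "a \<in> V" "b \<in> V"
    using assms unfolding simple_graph_def by blast
  then show ?thesis by (metis doubleton_eq_iff)
qed

lemma no_loop: "simple_graph V E \<Longrightarrow> {a,a} \<notin> E"
  using edge_props[of V E a a] by blast

lemma edge_sub: "simple_graph V E \<Longrightarrow> e \<in> E \<Longrightarrow> e \<subseteq> V"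
proof -
  assume "simple_graph V E" "e \<in> E"
  then obtain u v where "e = {u,v}" "u \<in> V" "v \<in> V" unfolding simple_graph_def by blast
  then show ?thesis by simp
qed

lemma simple_sub: "simple_graph V E \<Longrightarrow> E' \<subseteq> E \<Longrightarrow> simple_graph V E'"
  unfolding simple_graph_def Ball_def subset_iff by metis

lemma finite_E: "simple_graph V E \<Longrightarrow> finite E"
proof -
  assume s: "simple_graph V E"
  then have "E \<subseteq> Pow V" using edge_sub by blast
  moreover have "finite V" using s unfolding simple_graph_def by blast
  ultimately show ?thesis using finite_subset by blast
qed

lemma cyc_g_mem: "xs \<noteq> [] \<Longrightarrow> {xs!(k mod length xs), xs!(Suc k mod length xs)} \<in> cyc_edges xs"
  unfolding cyc_edges_def
  by (rule CollectI, rule exI[of _ "k mod length xs"]) (simp add: mod_Suc_eq)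

lemma cyc_elim: "e \<in> cyc_edges xs \<Longrightarrow> \<exists>i<length xs. e = {xs!i, xs!((i+1) mod length xs)}"
  unfolding cyc_edges_def by blast

lemma mod_suc_cases: assumes "j < (n::nat)" shows "(j+1) mod n = (if j+1 < n then j+1 else 0)"
proof (cases "j+1 < n")
  case True then show ?thesis by simp
next
  case False then have "j+1 = n" using assms by simp
  then show ?thesis by simp
qed

lemma cyc_idx_inj:
  assumes "cycle_list xs" "i < length xs" "j < length xs"
    "{xs!i, xs!((i+1) mod length xs)} = {xs!j, xs!((j+1) mod length xs)}"
  shows "i = j"
proof -
  let ?n = "length xs"
  have d: "distinct xs" and n3: "?n \<ge> 3" using assms(1) unfolding cycle_list_def by auto
  have i1: "(i+1) mod ?n < ?n" "(j+1) mod ?n < ?n" using n3 by (auto intro: mod_less_divisor)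
  have inj: "\<And>a b. a < ?n \<Longrightarrow> b < ?n \<Longrightarrow> xs!a = xs!b \<Longrightarrow> a = b"
    using d by (simp add: nth_eq_iff_index_eq)
  show ?thesis
  proof (cases "xs!i = xs!j")
    case True then show ?thesis by (rule inj[OF assms(2,3)])
  next
    case False
    then have e1: "xs!i = xs!((j+1) mod ?n)" and e2: "xs!((i+1) mod ?n) = xs!j"
      using assms(4) unfolding doubleton_eq_iff by blast+
    have A: "i = (j+1) mod ?n" by (rule inj[OF assms(2) i1(2) e1])
    have B: "(i+1) mod ?n = j" by (rule inj[OF i1(1) assms(3) e2])
    have A': "i = (if j+1 < ?n then j+1 else 0)" using A mod_suc_cases[OF assms(3)] by simp
    have B': "j = (if i+1 < ?n then i+1 else 0)" using B mod_suc_cases[OF assms(2)] by simp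
    show ?thesis
    proof (cases "j+1 < ?n")
      case True
      then have "i = j+1" using A' by simp
      then show ?thesis using B' n3 assms(2,3) by (cases "i+1 < ?n") simp_all
    next
      case False
      then have "i = 0" using A' by simp
      then show ?thesis using B' n3 False by (cases "i+1 < ?n") simp_all
    qed
  qed
qed

lemma cyc_two:
  assumes "cycle_list xs" shows "cyc_edges xs - {e} \<noteq> {}"
proof -
  let ?n = "length xs"
  have n3: "?n \<ge> 3" using assms unfolding cycle_list_def by auto
  have m0: "{xs!0, xs!((0+1) mod ?n)} \<in> cyc_edges xs" and m1: "{xs!1, xs!((1+1) mod ?n)} \<in> cyc_edges xs"
    unfolding cyc_edges_def using n3 by force+
  have "{xs!0, xs!((0+1) mod ?n)} \<noteq> {xs!1, xs!((1+1) mod ?n)}"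
  proof
    assume "{xs!0, xs!((0+1) mod ?n)} = {xs!1, xs!((1+1) mod ?n)}"
    moreover have "(0::nat) < ?n" "(1::nat) < ?n" using n3 by auto
    ultimately have "(0::nat) = 1" using cyc_idx_inj[OF assms, of 0 1] by blast
    then show False by simp
  qed
  then show ?thesis using m0 m1 by blast
qed

lemma cyc_edge_ends:
  assumes "cycle_list xs" "e \<in> cyc_edges xs"
  shows "\<exists>a b. e = {a,b} \<and> a \<noteq> b \<and> a \<in> set xs \<and> b \<in> set xs"
proof -
  let ?n = "length xs"
  have d: "distinct xs" and n3: "?n \<ge> 3" using assms(1) unfolding cycle_list_def by auto
  obtain i where i: "i < ?n" "e = {xs!i, xs!((i+1) mod ?n)}" using cyc_elim[OF assms(2)] by blast
  have "(i+1) mod ?n < ?n" using n3 by (auto intro: mod_less_divisor)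
  moreover have "i \<noteq> (i+1) mod ?n" using mod_suc_cases[OF i(1)] n3 by auto
  ultimately show ?thesis using i d by (metis nth_eq_iff_index_eq nth_mem)
qed

lemma cyc_vertex_edge:
  assumes "xs \<noteq> []" "y \<in> set xs" shows "\<exists>e\<in>cyc_edges xs. y \<in> e"
proof -
  obtain i where "i < length xs" "xs!i = y" using assms(2) by (metis in_set_conv_nth)
  then show ?thesis unfolding cyc_edges_def by blast
qed

lemma flip2: "x < (2::nat) \<Longrightarrow> y < 2 \<Longrightarrow> x \<noteq> y \<Longrightarrow> x = s mod 2 \<Longrightarrow> y = (Suc s) mod 2"
  by presburger

lemma parity_path:
  assumes "\<forall>k. a \<le> k \<longrightarrow> k < b \<longrightarrow> {g k, g (Suc k)} \<in> E'"
    and "\<forall>x y. {x,y} \<in> E' \<longrightarrow> c x \<noteq> c y" and "\<forall>k. c (g k) < (2::nat)" and "a \<le> b"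
  shows "c (g b) = (c (g a) + (b - a)) mod 2"
  using assms(1,4)
proof (induction b)
  case 0 then show ?case using assms(3) by simp
next
  case (Suc b)
  show ?case
  proof (cases "a = Suc b")
    case True then show ?thesis using assms(3) by simp
  next
    case False
    then have ab: "a \<le> b" using Suc by auto
    then have ih: "c (g b) = (c (g a) + (b - a)) mod 2" using Suc by auto
    have "c (g b) \<noteq> c (g (Suc b))" using Suc.prems ab assms(2) by auto
    moreover have "c (g b) < 2" "c (g (Suc b)) < 2" using assms(3) by auto
    moreover have "Suc b - a = Suc (b - a)" using ab by auto
    ultimately show ?thesis using ih flip2[of "c (g b)" "c (g (Suc b))" "c (g a) + (b - a)"] ab by simp
  qed
qed

lemma colorable_ex: "simple_graph V E \<Longrightarrow> colorable V E (card V)"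
proof -
  assume s: "simple_graph V E"
  then have "finite V" unfolding simple_graph_def by blast
  then obtain h where h: "bij_betw h V {0..<card V}" using ex_bij_betw_finite_nat by blast
  have "\<forall>v\<in>V. h v < card V" using h by (auto simp: bij_betw_def)
  moreover have "\<forall>u v. {u,v} \<in> E \<longrightarrow> h u \<noteq> h v"
    using edge_props[OF s] h by (metis bij_betw_def inj_on_def)
  ultimately show ?thesis unfolding colorable_def by blast
qed

lemma chi_col: "simple_graph V E \<Longrightarrow> colorable V E (chi V E)"
  unfolding chi_def by (rule LeastI, rule colorable_ex)

lemma chi_le: "colorable V E k \<Longrightarrow> chi V E \<le> k"
  unfolding chi_def by (rule Least_le)

lemma col_mono_k: "colorable V E k \<Longrightarrow> k \<le> k' \<Longrightarrow> colorable V E k'"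
proof -
  assume a: "colorable V E k" "k \<le> k'"
  then obtain f where f: "\<forall>v\<in>V. f v < k" "\<forall>u v. {u, v} \<in> E \<longrightarrow> f u \<noteq> f v"
    unfolding colorable_def by blast
  have "\<forall>v\<in>V. f v < k'" using f(1) a(2) by (meson less_le_trans)
  then show ?thesis unfolding colorable_def using f(2) by blast
qed

lemma col_mono_E: "colorable V E k \<Longrightarrow> E' \<subseteq> E \<Longrightarrow> colorable V E' k"
  unfolding colorable_def by blast

lemma chi_le_iff: "simple_graph V E \<Longrightarrow> chi V E \<le> k \<longleftrightarrow> colorable V E k"
  by (meson chi_col chi_le col_mono_k)

lemma chi_mono: "simple_graph V E \<Longrightarrow> E' \<subseteq> E \<Longrightarrow> chi V E' \<le> chi V E"
  using chi_col chi_le col_mono_E by blast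

lemma odd_mod_ne: "x < (2::nat) \<Longrightarrow> odd (n::nat) \<Longrightarrow> (x + n) mod 2 \<noteq> x"
  by presburger

lemma odd_cyc_not2:
  assumes "xs \<noteq> []" "odd (length xs)" "cyc_edges xs \<subseteq> E'" "set xs \<subseteq> V" "colorable V E' 2"
  shows False
proof -
  let ?n = "length xs"
  define g where "g k = xs!(k mod ?n)" for k
  obtain f where f: "\<forall>v\<in>V. f v < (2::nat)" "\<forall>u v. {u,v} \<in> E' \<longrightarrow> f u \<noteq> f v"
    using assms(5) unfolding colorable_def by blast
  have gs: "g k \<in> set xs" for k using assms(1) unfolding g_def by simp
  have "\<forall>k. 0 \<le> k \<longrightarrow> k < ?n \<longrightarrow> {g k, g (Suc k)} \<in> E'"
    using cyc_g_mem[OF assms(1)] assms(3) unfolding g_def by blast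
  moreover have gk: "\<forall>k. f (g k) < 2" using gs f(1) assms(4) by blast
  ultimately have h1: "f (g ?n) = (f (g 0) + ?n) mod 2"
    using parity_path[of 0 ?n g E' f] f(2) by simp
  have h2: "g ?n = g 0" unfolding g_def by simp
  have h3: "f (g 0) < 2" using gs f(1) assms(4) by blast
  have "f (g 0) = (f (g 0) + ?n) mod 2" using h1 unfolding h2 .
  from this[symmetric] odd_mod_ne[OF h3 assms(2)] show False by contradiction
qed

lemma oc_sub: "E' \<subseteq> E \<Longrightarrow> odd_cycles V E' = {C \<in> odd_cycles V E. C \<subseteq> E'}"
  unfolding odd_cycles_def by (rule set_eqI) blast



inductive walkp :: "'a set set \<Rightarrow> 'a \<Rightarrow> 'a \<Rightarrow> nat \<Rightarrow> bool" for E where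
  w0: "walkp E u u 0"
| wS: "walkp E u v n \<Longrightarrow> {v,w} \<in> E \<Longrightarrow> walkp E u w (Suc n)"

lemma walk_trans: "walkp E v w n \<Longrightarrow> walkp E u v m \<Longrightarrow> walkp E u w (m+n)"
proof (induction rule: walkp.induct)
  case (w0 x) then show ?case by simp
next
  case (wS x y n z)
  then have "walkp E u y (m+n)" by simp
  then show ?case using wS.hyps(2) by (simp add: walkp.wS)
qed

lemma walk_edge: "{u,v} \<in> E \<Longrightarrow> walkp E u v 1"
  using walkp.wS[OF walkp.w0] by simp

lemma walk_sym: "walkp E u v n \<Longrightarrow> walkp E v u n"
proof (induction rule: walkp.induct)
  case (w0 x) then show ?case by (rule walkp.w0)
next
  case (wS x y n z)
  have "{z,y} \<in> E" using wS.hyps(2) by (simp add: insert_commute)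
  then have "walkp E z y 1" by (rule walk_edge)
  from walk_trans[OF wS.IH this] show ?case by simp
qed

lemma walk_fun: "walkp E u v n \<Longrightarrow> \<exists>g. g 0 = u \<and> g n = v \<and> (\<forall>k<n. {g k, g (Suc k)} \<in> E)"
proof (induction rule: walkp.induct)
  case (w0 x) then show ?case by (rule exI[of _ "\<lambda>_. x"]) simp
next
  case (wS x y n z)
  then obtain g where g: "g 0 = x" "g n = y" "\<forall>k<n. {g k, g (Suc k)} \<in> E" by blast
  define h where "h = g(Suc n := z)"
  have "h 0 = x" "h (Suc n) = z" using g unfolding h_def by auto
  moreover have "\<forall>k<Suc n. {h k, h (Suc k)} \<in> E"
  proof (intro allI impI)
    fix k assume "k < Suc n"
    then consider "k < n" | "k = n" by linarith
    then show "{h k, h (Suc k)} \<in> E"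
    proof cases
      case 1 then show ?thesis using g(3) unfolding h_def by auto
    next
      case 2 then show ?thesis using g(2) wS.hyps(2) unfolding h_def by auto
    qed
  qed
  ultimately show ?case by blast
qed

lemma cw_list:
  assumes "a < b" "g b = g a" "\<forall>k. a \<le> k \<longrightarrow> k < b \<longrightarrow> {g k, g (Suc k)} \<in> E"
  shows "cyc_edges (map g [a..<b]) \<subseteq> E"
proof
  fix e assume "e \<in> cyc_edges (map g [a..<b])"
  then obtain i where i: "i < b - a"
    "e = {map g [a..<b] ! i, map g [a..<b] ! ((i+1) mod (b - a))}"
    using cyc_elim by fastforce
  have e1: "map g [a..<b] ! i = g (a+i)" using i(1) by simp
  have "map g [a..<b] ! ((i+1) mod (b - a)) = g (Suc (a+i))"
  proof (cases "i + 1 < b - a")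
    case True then show ?thesis by simp
  next
    case False
    then have "i + 1 = b - a" using i(1) by simp
    then have "(i+1) mod (b - a) = 0" "Suc (a+i) = b" using assms(1) by auto
    then show ?thesis using assms(1,2) by simp
  qed
  then have "e = {g (a+i), g (Suc (a+i))}" using i(2) e1 by simp
  then show "e \<in> E" using assms(3) i(1) by auto
qed

lemma odd_walk_cycle:
  assumes nl: "\<forall>a. {a,a} \<notin> E"
  shows "length xs = n \<Longrightarrow> odd n \<Longrightarrow> cyc_edges xs \<subseteq> E \<Longrightarrow>
    \<exists>ys. cycle_list ys \<and> odd (length ys) \<and> set ys \<subseteq> set xs \<and> cyc_edges ys \<subseteq> E"
proof (induction n arbitrary: xs rule: less_induct)
  case (less n)
  have n0: "0 < n" using less.prems(2) by presburger
  then have xne: "xs \<noteq> []" using less.prems(1) by auto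
  show ?case
  proof (cases "distinct xs")
    case True
    have "n \<noteq> 1"
    proof
      assume "n = 1"
      then have "{xs!0, xs!((0+1) mod length xs)} \<in> cyc_edges xs"
        using less.prems(1) unfolding cyc_edges_def by fastforce
      then have "{xs!0, xs!0} \<in> E" using less.prems(1,3) \<open>n = 1\<close> by auto
      then show False using nl by blast
    qed
    then have "n \<ge> 3" using less.prems(2) n0 by presburger
    then have "cycle_list xs" using True less.prems(1) unfolding cycle_list_def by simp
    then show ?thesis using less.prems by blast
  next
    case False
    then obtain i j where ij0: "i < n" "j < n" "i \<noteq> j" "xs!i = xs!j"
      using less.prems(1) unfolding distinct_conv_nth by blast
    obtain i j where ij: "i < j" "j < n" "xs!i = xs!j"
    proof (cases "i < j")
      case True then show ?thesis using that ij0 by blast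
    next
      case False then show ?thesis using that[of j i] ij0 by simp
    qed
    define g where "g k = xs!(k mod n)" for k
    have ge: "\<forall>k. {g k, g (Suc k)} \<in> E"
      using cyc_g_mem[OF xne] less.prems(1,3) unfolding g_def by blast
    have gs: "g k \<in> set xs" for k using n0 less.prems(1) unfolding g_def by simp
    have gi: "g i = g j" using ij unfolding g_def by simp
    have gni: "g (n+i) = g j" using ij unfolding g_def by simp
    define ins where "ins = map g [i..<j]"
    define outs where "outs = map g [j..<n+i]"
    have c1: "cyc_edges ins \<subseteq> E" unfolding ins_def
      by (rule cw_list) (use ij gi ge in auto)
    have c2: "cyc_edges outs \<subseteq> E" unfolding outs_def
      by (rule cw_list) (use ij gni ge in auto)
    have l1: "length ins = j - i" and l2: "length outs = n + i - j"
      unfolding ins_def outs_def by simp_all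
    have s1: "set ins \<subseteq> set xs" and s2: "set outs \<subseteq> set xs"
      unfolding ins_def outs_def using gs by auto
    have lt: "j - i < n" "n + i - j < n" using ij by auto
    have "odd (j - i) \<or> odd (n + i - j)" using less.prems(2) ij by presburger
    then show ?thesis
    proof
      assume "odd (j - i)"
      then obtain ys where "cycle_list ys \<and> odd (length ys) \<and> set ys \<subseteq> set ins \<and> cyc_edges ys \<subseteq> E"
        using less.IH[OF lt(1) l1 _ c1] by blast
      then show ?thesis using s1 by blast
    next
      assume "odd (n + i - j)"
      then obtain ys where "cycle_list ys \<and> odd (length ys) \<and> set ys \<subseteq> set outs \<and> cyc_edges ys \<subseteq> E"
        using less.IH[OF lt(2) l2 _ c2] by blast
      then show ?thesis using s2 by blast
    qed
  qed
qed

lemma set_cycle_V: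
  assumes "simple_graph V E" "cycle_list ys" "cyc_edges ys \<subseteq> E" shows "set ys \<subseteq> V"
proof
  fix y assume "y \<in> set ys"
  moreover have "ys \<noteq> []" using assms(2) unfolding cycle_list_def by auto
  ultimately obtain e where e: "e \<in> cyc_edges ys" "y \<in> e" using cyc_vertex_edge[of ys y] by blast
  then have "e \<in> E" using assms(3) by blast
  then have "e \<subseteq> V" by (rule edge_sub[OF assms(1)])
  then show "y \<in> V" using e(2) by blast
qed

lemma odd_closed_walk:
  assumes s: "simple_graph V E" and w: "walkp E u u n" and o: "odd n"
  shows "odd_cycles V E \<noteq> {}"
proof -
  obtain g where g: "g 0 = u" "g n = u" "\<forall>k<n. {g k, g (Suc k)} \<in> E" using walk_fun[OF w] by blast
  have n0: "0 < n" using o by presburger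
  have c: "cyc_edges (map g [0..<n]) \<subseteq> E" by (rule cw_list) (use n0 g in auto)
  have nl: "\<forall>a. {a,a} \<notin> E" using no_loop[OF s] by (intro allI)
  have "\<exists>ys. cycle_list ys \<and> odd (length ys) \<and> set ys \<subseteq> set (map g [0..<n]) \<and> cyc_edges ys \<subseteq> E"
    by (rule odd_walk_cycle[OF nl _ o c]) simp
  then obtain ys where ys: "cycle_list ys" "odd (length ys)" "cyc_edges ys \<subseteq> E" by blast
  have "set ys \<subseteq> V" by (rule set_cycle_V[OF s ys(1,3)])
  then have "cyc_edges ys \<in> odd_cycles V E" unfolding odd_cycles_def using ys by blast
  then show ?thesis by blast
qed

lemma bipartite:
  assumes s: "simple_graph V E" and no: "odd_cycles V E = {}"
  shows "colorable V E 2"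
proof -
  define comp where "comp u = {v. \<exists>n. walkp E u v n}" for u
  define rt where "rt u = (SOME w. w \<in> comp u)" for u
  define col where "col v = (if \<exists>n. odd n \<and> walkp E (rt v) v n then 1 else 0::nat)" for v
  have rt_in: "\<exists>n. walkp E u (rt u) n" for u
  proof -
    have "u \<in> comp u" unfolding comp_def using walkp.w0[of E u] by blast
    then have "rt u \<in> comp u" unfolding rt_def by (rule someI)
    then show ?thesis unfolding comp_def by blast
  qed
  have comp_sub: "comp v \<subseteq> comp u" if "{u,v} \<in> E" for u v
  proof
    fix x assume "x \<in> comp v"
    then obtain n where "walkp E v x n" unfolding comp_def by blast
    from walk_trans[OF this walk_edge[OF that]] show "x \<in> comp u" unfolding comp_def by blast
  qed
  have comp_eq: "comp u = comp v" if "{u,v} \<in> E" for u v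
  proof -
    have "{v,u} \<in> E" using that by (simp add: insert_commute)
    then show ?thesis using comp_sub[OF that] comp_sub[of v u] by (rule_tac equalityI) simp_all
  qed
  have noodd: "\<not> (walkp E w w n \<and> odd n)" for w n
  proof
    assume "walkp E w w n \<and> odd n"
    then have "odd_cycles V E \<noteq> {}" using odd_closed_walk[OF s, of w n] by blast
    then show False using no by simp
  qed
  have "col u \<noteq> col v" if uv0: "{u,v} \<in> E" for u v
  proof -
    have r: "rt u = rt v" using comp_eq[OF uv0] unfolding rt_def by simp
    obtain k where "walkp E u (rt u) k" using rt_in by blast
    then have rk: "walkp E (rt u) u k" by (rule walk_sym)
    have uv: "walkp E u v 1" by (rule walk_edge[OF uv0])
    show ?thesis
    proof (cases "\<exists>n. odd n \<and> walkp E (rt u) u n")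
      case True
      then obtain n where n: "odd n" "walkp E (rt u) u n" by blast
      have rv: "walkp E (rt u) v (n+1)" using walk_trans[OF uv n(2)] by simp
      have "\<not> (\<exists>m. odd m \<and> walkp E (rt u) v m)"
      proof
        assume "\<exists>m. odd m \<and> walkp E (rt u) v m"
        then obtain m where m: "odd m" "walkp E (rt u) v m" by blast
        have "walkp E v (rt u) (n+1)" using rv by (rule walk_sym)
        from walk_trans[OF m(2) this] have "walkp E v v (n+1+m)" .
        moreover have "odd (n+1+m)" using n(1) m(1) by simp
        ultimately show False using noodd by blast
      qed
      then show ?thesis using True r unfolding col_def by simp
    next
      case False
      then have "\<not> odd k" using rk by blast
      have "walkp E (rt u) v (k+1)" using walk_trans[OF uv rk] by simp
      moreover have "odd (k+1)" using \<open>\<not> odd k\<close> by simp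
      ultimately have "\<exists>m. odd m \<and> walkp E (rt v) v m" unfolding r[symmetric] by blast
      then show ?thesis using False unfolding col_def by simp
    qed
  qed
  moreover have "\<forall>v\<in>V. col v < 2" unfolding col_def by simp
  ultimately show ?thesis unfolding colorable_def by blast
qed

lemma not_col1:
  assumes "simple_graph V E" "E \<noteq> {}" shows "\<not> colorable V E 1"
proof
  assume "colorable V E 1"
  then obtain f where f: "\<forall>v\<in>V. f v < (1::nat)" "\<forall>u v. {u,v} \<in> E \<longrightarrow> f u \<noteq> f v"
    unfolding colorable_def by blast
  obtain e where e: "e \<in> E" using assms(2) by blast
  have "\<forall>e\<in>E. \<exists>u v. e = {u, v} \<and> u \<noteq> v \<and> u \<in> V \<and> v \<in> V"
    using assms(1) unfolding simple_graph_def by (rule conjunct2)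
  then obtain u v where "e = {u,v}" "u \<in> V" "v \<in> V" using e by blast
  then have uv: "{u,v} \<in> E" and "u \<in> V" "v \<in> V" using e by simp_all
  then have "f u = 0" "f v = 0" using f(1) by auto
  moreover have "f u \<noteq> f v" using f(2) uv by blast
  ultimately show False by simp
qed

lemma chi_eq2:
  assumes "simple_graph V E" "E \<noteq> {}" "odd_cycles V E = {}" shows "chi V E = 2"
proof -
  have "chi V E \<le> 2" by (rule chi_le[OF bipartite[OF assms(1,3)]])
  moreover have "\<not> chi V E \<le> 1"
  proof
    assume "chi V E \<le> 1"
    then have "colorable V E 1" using chi_le_iff[OF assms(1), of 1] by simp
    then show False using not_col1[OF assms(1,2)] by simp
  qed
  ultimately show ?thesis by simp
qed

lemma chi2_imp:
  assumes "simple_graph V E" "chi V E \<le> 2" shows "odd_cycles V E = {}"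
proof (rule ccontr)
  assume "odd_cycles V E \<noteq> {}"
  then obtain xs where xs: "cycle_list xs" "odd (length xs)" "set xs \<subseteq> V" "cyc_edges xs \<subseteq> E"
    unfolding odd_cycles_def by blast
  have c: "colorable V E 2" using chi_le_iff[OF assms(1), of 2] assms(2) by simp
  have "xs \<noteq> []" using xs(1) unfolding cycle_list_def by auto
  then show False using odd_cyc_not2[OF _ xs(2) xs(4) xs(3) c] by simp
qed

lemma chi_ge3:
  assumes "simple_graph V E" "odd_cycles V E \<noteq> {}" shows "3 \<le> chi V E"
proof (rule ccontr)
  assume "\<not> 3 \<le> chi V E"
  then have "chi V E \<le> 2" by simp
  then have "odd_cycles V E = {}" by (rule chi2_imp[OF assms(1)])
  with assms(2) show False by contradiction
qed



lemma par_eq: "x < (2::nat) \<Longrightarrow> y < 2 \<Longrightarrow> x = (y + d) mod 2 \<Longrightarrow> (x = y \<longleftrightarrow> even d)"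
  by presburger

lemma arc_choice_ij:
  assumes cyc: "cycle_list xs" and od: "odd (length xs)" and ij: "i < j" "j < length xs"
  shows "\<exists>e\<in>cyc_edges xs. \<forall>E' c. cyc_edges xs - {e} \<subseteq> E' \<longrightarrow> (\<forall>x y. {x,y} \<in> E' \<longrightarrow> c x \<noteq> c y)
           \<longrightarrow> (\<forall>x\<in>set xs. c x < (2::nat)) \<longrightarrow> (c (xs!i) = c (xs!j) \<longleftrightarrow> \<beta>)"
proof -
  let ?n = "length xs"
  define g where "g k = xs!(k mod ?n)" for k
  have n3: "?n \<ge> 3" using cyc unfolding cycle_list_def by simp
  have xne: "xs \<noteq> []" using n3 by auto
  have gs: "g k \<in> set xs" for k using xne unfolding g_def by simp
  have gmem: "{g k, g (Suc k)} \<in> cyc_edges xs" for k using cyc_g_mem[OF xne] unfolding g_def by blast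
  have ginj: "{g k, g (Suc k)} \<noteq> {g m, g (Suc m)}" if "k mod ?n \<noteq> m mod ?n" for k m
  proof
    assume eq: "{g k, g (Suc k)} = {g m, g (Suc m)}"
    have "k mod ?n = m mod ?n"
    proof (rule cyc_idx_inj[OF cyc])
      show "k mod ?n < ?n" "m mod ?n < ?n" using xne by simp_all
      show "{xs ! (k mod ?n), xs ! ((k mod ?n + 1) mod ?n)} = {xs ! (m mod ?n), xs ! ((m mod ?n + 1) mod ?n)}"
        using eq unfolding g_def by (simp add: mod_Suc_eq)
    qed
    then show False using that by simp
  qed
  have key: "c (g b) = (c (g a) + (b - a)) mod 2"
    if E': "cyc_edges xs - {{g m, g (Suc m)}} \<subseteq> E'" and pr: "\<forall>x y. {x,y} \<in> E' \<longrightarrow> c x \<noteq> c y"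
      and cl: "\<forall>x\<in>set xs. c x < (2::nat)" and av: "\<forall>k. a \<le> k \<longrightarrow> k < b \<longrightarrow> k mod ?n \<noteq> m mod ?n"
      and ab: "a \<le> b"
    for E' c m a b
  proof (rule parity_path[OF _ pr _ ab])
    show "\<forall>k. a \<le> k \<longrightarrow> k < b \<longrightarrow> {g k, g (Suc k)} \<in> E'"
    proof (intro allI impI)
      fix k assume "a \<le> k" "k < b"
      then have "{g k, g (Suc k)} \<noteq> {g m, g (Suc m)}" using ginj av by blast
      then show "{g k, g (Suc k)} \<in> E'" using gmem[of k] E' by blast
    qed
    show "\<forall>k. c (g k) < 2" using cl gs by blast
  qed
  have gi: "g i = xs!i" "g j = xs!j" "g (?n + i) = xs!i" using ij unfolding g_def by simp_all
  have im: "i mod ?n = i" "j mod ?n = j" using ij by simp_all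
  show ?thesis
  proof (cases "\<beta> \<longleftrightarrow> even (j - i)")
    case True
    show ?thesis
    proof (rule bexI[OF _ gmem[of j]], intro allI impI)
      fix E' c assume a1: "cyc_edges xs - {{g j, g (Suc j)}} \<subseteq> E'"
        and a2: "\<forall>x y. {x,y} \<in> E' \<longrightarrow> c x \<noteq> c y" and a3: "\<forall>x\<in>set xs. c x < (2::nat)"
      have av: "\<forall>k. i \<le> k \<longrightarrow> k < j \<longrightarrow> k mod ?n \<noteq> j mod ?n" using ij by auto
      have "c (g j) = (c (g i) + (j - i)) mod 2" by (rule key[OF a1 a2 a3 av]) (use ij in simp)
      then have "c (xs!j) = (c (xs!i) + (j - i)) mod 2" using gi by simp
      moreover have "c (xs!j) < 2" "c (xs!i) < 2" using a3 ij by auto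
      ultimately have "c (xs!j) = c (xs!i) \<longleftrightarrow> even (j - i)" using par_eq by blast
      then show "c (xs!i) = c (xs!j) \<longleftrightarrow> \<beta>" using True by auto
    qed
  next
    case False
    have par: "even (j - i) \<longleftrightarrow> odd (?n + i - j)" using od ij by presburger
    show ?thesis
    proof (rule bexI[OF _ gmem[of i]], intro allI impI)
      fix E' c assume a1: "cyc_edges xs - {{g i, g (Suc i)}} \<subseteq> E'"
        and a2: "\<forall>x y. {x,y} \<in> E' \<longrightarrow> c x \<noteq> c y" and a3: "\<forall>x\<in>set xs. c x < (2::nat)"
      have av: "\<forall>k. j \<le> k \<longrightarrow> k < ?n + i \<longrightarrow> k mod ?n \<noteq> i mod ?n"
      proof (intro allI impI)
        fix k assume k: "j \<le> k" "k < ?n + i"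
        show "k mod ?n \<noteq> i mod ?n"
        proof (cases "k < ?n")
          case True then show ?thesis using k ij by simp
        next
          case False
          then have "k mod ?n = k - ?n" using k ij by (simp add: le_mod_geq)
          then show ?thesis using k False ij by simp
        qed
      qed
      have "c (g (?n + i)) = (c (g j) + (?n + i - j)) mod 2" by (rule key[OF a1 a2 a3 av]) (use ij in simp)
      then have "c (xs!i) = (c (xs!j) + (?n + i - j)) mod 2" using gi by simp
      moreover have "c (xs!j) < 2" "c (xs!i) < 2" using a3 ij by auto
      ultimately have "c (xs!i) = c (xs!j) \<longleftrightarrow> even (?n + i - j)" using par_eq by blast
      then show "c (xs!i) = c (xs!j) \<longleftrightarrow> \<beta>" using False par by auto
    qed
  qed
qed

lemma arc_choice:
  assumes cyc: "cycle_list xs" and od: "odd (length xs)" and uv: "u \<in> set xs" "v \<in> set xs" "u \<noteq> v"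
  shows "\<exists>e\<in>cyc_edges xs. \<forall>E' c. cyc_edges xs - {e} \<subseteq> E' \<longrightarrow> (\<forall>x y. {x,y} \<in> E' \<longrightarrow> c x \<noteq> c y)
           \<longrightarrow> (\<forall>x\<in>set xs. c x < (2::nat)) \<longrightarrow> (c u = c v \<longleftrightarrow> \<beta>)"
proof -
  obtain i j where i: "i < length xs" "xs!i = u" and j: "j < length xs" "xs!j = v"
    using uv(1,2) by (metis in_set_conv_nth)
  have "i \<noteq> j" using i j uv(3) by auto
  then consider "i < j" | "j < i" by linarith
  then show ?thesis
  proof cases
    case 1 then show ?thesis using arc_choice_ij[OF cyc od 1 j(1), of \<beta>] i j by simp
  next
    case 2
    have "\<exists>e\<in>cyc_edges xs. \<forall>E' c. cyc_edges xs - {e} \<subseteq> E' \<longrightarrow> (\<forall>x y. {x,y} \<in> E' \<longrightarrow> c x \<noteq> c y)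
           \<longrightarrow> (\<forall>x\<in>set xs. c x < (2::nat)) \<longrightarrow> (c v = c u \<longleftrightarrow> \<beta>)"
      using arc_choice_ij[OF cyc od 2 i(1), of \<beta>] i j by simp
    then show ?thesis by (simp add: eq_commute)
  qed
qed



lemma oc_empty_iff:
  assumes oc: "odd_cycles V E = {P,Q}" and sub: "E' \<subseteq> E"
  shows "odd_cycles V E' = {} \<longleftrightarrow> (\<not> P \<subseteq> E' \<and> \<not> Q \<subseteq> E')"
proof -
  have "odd_cycles V E' = {C \<in> {P,Q}. C \<subseteq> E'}" using oc_sub[OF sub, of V] oc by simp
  then show ?thesis by auto
qed

lemma chi_E2:
  assumes s: "simple_graph V E" and oc: "odd_cycles V E = {P,Q}" and sub: "E' \<subseteq> E"
    and ne: "E' \<noteq> {}" and np: "\<not> P \<subseteq> E'" and nq: "\<not> Q \<subseteq> E'"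
  shows "chi V E' = 2"
proof (rule chi_eq2)
  show "simple_graph V E'" by (rule simple_sub[OF s sub])
  show "E' \<noteq> {}" by (rule ne)
  show "odd_cycles V E' = {}" using oc_empty_iff[OF oc sub] np nq by simp
qed

lemma chi_E3:
  assumes s: "simple_graph V E" and oc: "odd_cycles V E = {P,Q}" and sub: "E' \<subseteq> E"
    and pq: "P \<subseteq> E' \<or> Q \<subseteq> E'"
  shows "3 \<le> chi V E'"
proof (rule chi_ge3)
  show "simple_graph V E'" by (rule simple_sub[OF s sub])
  show "odd_cycles V E' \<noteq> {}" using oc_empty_iff[OF oc sub] pq by simp
qed

lemma small_F:
  assumes "P \<inter> Q = {}" "finite F" "card F < 2" shows "P \<inter> F = {} \<or> Q \<inter> F = {}"
proof (rule ccontr)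
  assume "\<not> (P \<inter> F = {} \<or> Q \<inter> F = {})"
  then obtain p q where pq: "p \<in> P" "p \<in> F" "q \<in> Q" "q \<in> F" by blast
  then have "p \<noteq> q" using assms(1) by blast
  then have "card {p,q} = 2" by simp
  moreover have "card {p,q} \<le> card F" by (rule card_mono[OF assms(2)]) (use pq in blast)
  ultimately show False using assms(3) by simp
qed

lemma es_two:
  assumes s: "simple_graph V E" and oc: "odd_cycles V E = {P,Q}" and pE: "P \<subseteq> E" and qE: "Q \<subseteq> E"
    and dj: "P \<inter> Q = {}" and pn: "\<forall>e. P - {e} \<noteq> {}" and qn: "Q \<noteq> {}" and c3: "chi V E = 3"
  shows "es_chi V E = 2"
  unfolding es_chi_def
proof (rule Least_equality)
  obtain p where p: "p \<in> P" using pn by blast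
  obtain q where q: "q \<in> Q" using qn by blast
  obtain x where x: "x \<in> P" "x \<noteq> p" using pn by blast
  have xq: "x \<noteq> q" using x(1) q dj by blast
  have pq: "p \<noteq> q" using p q dj by blast
  have sub: "E - {p,q} \<subseteq> E" by blast
  have "chi V (E - {p,q}) = 2"
  proof (rule chi_E2[OF s oc sub])
    show "E - {p,q} \<noteq> {}" using x xq pE by blast
    show "\<not> P \<subseteq> E - {p,q}" using p by blast
    show "\<not> Q \<subseteq> E - {p,q}" using q by blast
  qed
  moreover have "{p,q} \<subseteq> E" using p q pE qE by blast
  moreover have "card {p,q} = 2" using pq by simp
  ultimately show "\<exists>F\<subseteq>E. card F = 2 \<and> chi V (E - F) = chi V E - 1" using c3 by (intro exI[of _ "{p,q}"]) auto
next
  fix y assume "\<exists>F\<subseteq>E. card F = y \<and> chi V (E - F) = chi V E - 1"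
  then obtain F where F: "F \<subseteq> E" "card F = y" "chi V (E - F) = 2" using c3 by auto
  show "2 \<le> y"
  proof (rule ccontr)
    assume "\<not> 2 \<le> y"
    moreover have "finite F" using finite_subset[OF F(1) finite_E[OF s]] .
    ultimately have "P \<inter> F = {} \<or> Q \<inter> F = {}" using small_F[OF dj] F(2) by simp
    then have "P \<subseteq> E - F \<or> Q \<subseteq> E - F" using pE qE by blast
    then have "3 \<le> chi V (E - F)" by (rule chi_E3[OF s oc Diff_subset])
    then show False using F(3) by simp
  qed
qed

lemma es_drop:
  assumes s: "simple_graph V E" and oc: "odd_cycles V E = {P,Q}" and pE: "P \<subseteq> E" and qE: "Q \<subseteq> E"
    and dj: "P \<inter> Q = {}" and pn: "\<forall>e. P - {e} \<noteq> {}" and qn: "Q \<noteq> {}" and c3: "chi V E = 3"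
    and e: "e \<in> P"
  shows "es_chi V (E - {e}) \<le> 1"
proof -
  obtain q where q: "q \<in> Q" using qn by blast
  obtain x where x: "x \<in> P" "x \<noteq> e" using pn by blast
  have xq: "x \<noteq> q" using x(1) q dj by blast
  have eq: "e \<noteq> q" using e q dj by blast
  have s1: "E - {e} \<subseteq> E" by blast
  have "3 \<le> chi V (E - {e})" by (rule chi_E3[OF s oc s1]) (use qE e dj in blast)
  moreover have "chi V (E - {e}) \<le> chi V E" by (rule chi_mono[OF s s1])
  ultimately have c31: "chi V (E - {e}) = 3" using c3 by simp
  have s2: "E - {e} - {q} \<subseteq> E" by blast
  have "chi V (E - {e} - {q}) = 2"
  proof (rule chi_E2[OF s oc s2])
    show "E - {e} - {q} \<noteq> {}" using x xq pE by blast
    show "\<not> P \<subseteq> E - {e} - {q}" using e by blast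
    show "\<not> Q \<subseteq> E - {e} - {q}" using q by blast
  qed
  then have "\<exists>F\<subseteq>E - {e}. card F = 1 \<and> chi V (E - {e} - F) = chi V (E - {e}) - 1"
    using c31 q qE eq by (intro exI[of _ "{q}"]) auto
  then show ?thesis unfolding es_chi_def by (rule Least_le)
qed

lemma disj_need:
  assumes s: "simple_graph V E" and oc: "odd_cycles V E = {P,Q}" and pE: "P \<subseteq> E" and qE: "Q \<subseteq> E"
    and pn: "\<forall>e. P - {e} \<noteq> {}" and c3: "chi V E = 3" and es2: "es_chi V E = 2"
  shows "P \<inter> Q = {}"
proof (rule ccontr)
  assume "P \<inter> Q \<noteq> {}"
  then obtain f where f: "f \<in> P" "f \<in> Q" by blast
  obtain x where x: "x \<in> P" "x \<noteq> f" using pn by blast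
  have s1: "E - {f} \<subseteq> E" by blast
  have "chi V (E - {f}) = 2"
  proof (rule chi_E2[OF s oc s1])
    show "E - {f} \<noteq> {}" using x pE by blast
    show "\<not> P \<subseteq> E - {f}" using f by blast
    show "\<not> Q \<subseteq> E - {f}" using f by blast
  qed
  then have "\<exists>F\<subseteq>E. card F = 1 \<and> chi V (E - F) = chi V E - 1"
    using c3 f pE by (intro exI[of _ "{f}"]) auto
  then have "es_chi V E \<le> 1" unfolding es_chi_def by (rule Least_le)
  then show False using es2 by simp
qed

lemma cover:
  assumes s: "simple_graph V E" and oc: "odd_cycles V E = {P,Q}" and pE: "P \<subseteq> E" and qE: "Q \<subseteq> E"
    and dj: "P \<inter> Q = {}" and pn: "\<forall>e. P - {e} \<noteq> {}" and qn: "Q \<noteq> {}" and c3: "chi V E = 3"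
    and crit: "\<forall>e\<in>E. es_chi V (E - {e}) < 2"
  shows "E \<subseteq> P \<union> Q"
proof
  fix e assume eE: "e \<in> E"
  show "e \<in> P \<union> Q"
  proof (rule ccontr)
    assume ne: "e \<notin> P \<union> Q"
    define E1 where "E1 = E - {e}"
    have s1: "E1 \<subseteq> E" unfolding E1_def by blast
    have pE1: "P \<subseteq> E1" using pE ne unfolding E1_def by blast
    have qE1: "Q \<subseteq> E1" using qE ne unfolding E1_def by blast
    have "3 \<le> chi V E1" by (rule chi_E3[OF s oc s1]) (use pE1 in blast)
    moreover have "chi V E1 \<le> chi V E" by (rule chi_mono[OF s s1])
    ultimately have c31: "chi V E1 = 3" using c3 by simp
    obtain p where p: "p \<in> P" using pn by blast
    obtain q where q: "q \<in> Q" using qn by blast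
    obtain x where x: "x \<in> P" "x \<noteq> p" using pn by blast
    have xq: "x \<noteq> q" using x(1) q dj by blast
    have pq: "p \<noteq> q" using p q dj by blast
    have s2: "E1 - {p,q} \<subseteq> E" using s1 by blast
    have "chi V (E1 - {p,q}) = 2"
    proof (rule chi_E2[OF s oc s2])
      show "E1 - {p,q} \<noteq> {}" using x xq pE1 by blast
      show "\<not> P \<subseteq> E1 - {p,q}" using p by blast
      show "\<not> Q \<subseteq> E1 - {p,q}" using q by blast
    qed
    then have ex: "\<exists>F. F \<subseteq> E1 \<and> card F = 2 \<and> chi V (E1 - F) = chi V E1 - 1"
      using c31 p q pE1 qE1 pq by (intro exI[of _ "{p,q}"]) auto
    have "\<exists>F\<subseteq>E1. card F = es_chi V E1 \<and> chi V (E1 - F) = chi V E1 - 1"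
      unfolding es_chi_def by (rule LeastI_ex) (use ex in blast)
    then obtain F where F: "F \<subseteq> E1" "card F = es_chi V E1" "chi V (E1 - F) = 2" using c31 by auto
    have "es_chi V E1 < 2" using crit eE unfolding E1_def by blast
    moreover have "finite F" using finite_subset[OF F(1)] finite_subset[OF s1 finite_E[OF s]] by blast
    ultimately have "P \<inter> F = {} \<or> Q \<inter> F = {}" using small_F[OF dj] F(2) by simp
    then have "P \<subseteq> E1 - F \<or> Q \<subseteq> E1 - F" using pE1 qE1 by blast
    moreover have s3: "E1 - F \<subseteq> E" using s1 by blast
    ultimately have "3 \<le> chi V (E1 - F)" using chi_E3[OF s oc s3] by blast
    then show False using F(3) by simp
  qed
qed

lemma share:
  assumes s: "simple_graph V E" and oc: "odd_cycles V E = {cyc_edges xs, cyc_edges ys}"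
    and pE: "cyc_edges xs \<subseteq> E" and qE: "cyc_edges ys \<subseteq> E"
    and cx: "cycle_list xs" and cy: "cycle_list ys" and ox: "odd (length xs)" and oy: "odd (length ys)"
    and sx: "set xs \<subseteq> V" and sy: "set ys \<subseteq> V"
    and dj: "cyc_edges xs \<inter> cyc_edges ys = {}"
    and u: "u \<in> set xs" "u \<in> set ys" and v: "v \<in> set xs" "v \<in> set ys" and uv: "u \<noteq> v"
  shows False
proof -
  obtain e where e: "e \<in> cyc_edges xs" and he: "\<forall>E' c. cyc_edges xs - {e} \<subseteq> E' \<longrightarrow> (\<forall>x y. {x,y} \<in> E' \<longrightarrow> c x \<noteq> c y)
           \<longrightarrow> (\<forall>x\<in>set xs. c x < (2::nat)) \<longrightarrow> (c u = c v \<longleftrightarrow> True)"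
    using arc_choice[OF cx ox u(1) v(1) uv, of True] by blast
  obtain e' where e': "e' \<in> cyc_edges ys" and he': "\<forall>E' c. cyc_edges ys - {e'} \<subseteq> E' \<longrightarrow> (\<forall>x y. {x,y} \<in> E' \<longrightarrow> c x \<noteq> c y)
           \<longrightarrow> (\<forall>x\<in>set ys. c x < (2::nat)) \<longrightarrow> (c u = c v \<longleftrightarrow> False)"
    using arc_choice[OF cy oy u(2) v(2) uv, of False] by blast
  define E' where "E' = E - {e, e'}"
  have sub: "E' \<subseteq> E" unfolding E'_def by blast
  have "odd_cycles V E' = {}" using oc_empty_iff[OF oc sub] e e' unfolding E'_def by blast
  then have "colorable V E' 2" by (rule bipartite[OF simple_sub[OF s sub]])
  then obtain c where c1: "\<forall>v\<in>V. c v < (2::nat)" and c2: "\<forall>x y. {x,y} \<in> E' \<longrightarrow> c x \<noteq> c y"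
    unfolding colorable_def by blast
  have a1: "cyc_edges xs - {e} \<subseteq> E'" using pE e' dj unfolding E'_def by blast
  have a2: "cyc_edges ys - {e'} \<subseteq> E'" using qE e dj unfolding E'_def by blast
  have c1x: "\<forall>x\<in>set xs. c x < 2" using c1 sx by blast
  have c1y: "\<forall>x\<in>set ys. c x < 2" using c1 sy by blast
  have "c u = c v" using spec[OF spec[OF he, of E'], of c] a1 c2 c1x by simp
  moreover have "c u \<noteq> c v" using spec[OF spec[OF he', of E'], of c] a2 c2 c1y by simp
  ultimately show False by simp
qed



lemma edge_in_set: "cycle_list xs \<Longrightarrow> e \<in> cyc_edges xs \<Longrightarrow> e \<subseteq> set xs"
  using cyc_edge_ends[of xs e] by blast

lemma disj_share1:
  assumes cx: "cycle_list xs" and cy: "cycle_list ys"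
    and sh: "\<forall>u v. u \<in> set xs \<inter> set ys \<longrightarrow> v \<in> set xs \<inter> set ys \<longrightarrow> u = v"
  shows "cyc_edges xs \<inter> cyc_edges ys = {}"
proof (rule ccontr)
  assume "cyc_edges xs \<inter> cyc_edges ys \<noteq> {}"
  then obtain e where e: "e \<in> cyc_edges xs" "e \<in> cyc_edges ys" by blast
  obtain a b where ab: "e = {a,b}" "a \<noteq> b" "a \<in> set xs" "b \<in> set xs" using cyc_edge_ends[OF cx e(1)] by blast
  have "e \<subseteq> set ys" by (rule edge_in_set[OF cy e(2)])
  then have "a \<in> set ys" "b \<in> set ys" using ab(1) by auto
  then show False using sh ab by blast
qed

lemma private_vertex:
  assumes cx: "cycle_list xs"
    and sh: "\<forall>u v. u \<in> set xs \<inter> set ys \<longrightarrow> v \<in> set xs \<inter> set ys \<longrightarrow> u = v"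
  shows "\<exists>a\<in>set xs. a \<notin> set ys"
proof (rule ccontr)
  assume "\<not> (\<exists>a\<in>set xs. a \<notin> set ys)"
  then have sub: "set xs \<subseteq> set ys" by blast
  have d: "distinct xs" and n3: "length xs \<ge> 3" using cx unfolding cycle_list_def by auto
  have "xs \<noteq> []" using n3 by auto
  then have "xs!0 \<noteq> xs!1" using nth_eq_iff_index_eq[OF d, of 0 1] n3 by simp
  moreover have "xs!0 \<in> set xs" "xs!1 \<in> set xs" using n3 by (auto intro!: nth_mem)
  ultimately show False using sh sub by blast
qed

lemma col3:
  assumes s: "simple_graph V E" and oc: "odd_cycles V E = {cyc_edges xs, cyc_edges ys}"
    and EE: "E = cyc_edges xs \<union> cyc_edges ys"
    and cx: "cycle_list xs" and cy: "cycle_list ys"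
    and sh: "\<forall>u v. u \<in> set xs \<inter> set ys \<longrightarrow> v \<in> set xs \<inter> set ys \<longrightarrow> u = v"
  shows "colorable V E 3"
proof -
  have sh': "\<forall>u v. u \<in> set ys \<inter> set xs \<longrightarrow> v \<in> set ys \<inter> set xs \<longrightarrow> u = v" using sh by blast
  obtain a where a: "a \<in> set xs" "a \<notin> set ys" using private_vertex[OF cx sh] by blast
  obtain p where p: "p \<in> set ys" "p \<notin> set xs" using private_vertex[OF cy sh'] by blast
  have xne: "xs \<noteq> []" and yne: "ys \<noteq> []" using cx cy unfolding cycle_list_def by auto
  define E' where "E' = {e \<in> E. a \<notin> e \<and> p \<notin> e}"
  have sub: "E' \<subseteq> E" unfolding E'_def by blast
  obtain ea where ea: "ea \<in> cyc_edges xs" "a \<in> ea" using cyc_vertex_edge[OF xne a(1)] by blast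
  obtain ep where ep: "ep \<in> cyc_edges ys" "p \<in> ep" using cyc_vertex_edge[OF yne p(1)] by blast
  have "\<not> cyc_edges xs \<subseteq> E'" using ea unfolding E'_def by blast
  moreover have "\<not> cyc_edges ys \<subseteq> E'" using ep unfolding E'_def by blast
  ultimately have "odd_cycles V E' = {}" using oc_empty_iff[OF oc sub] by simp
  then have "colorable V E' 2" by (rule bipartite[OF simple_sub[OF s sub]])
  then obtain c where c1: "\<forall>v\<in>V. c v < (2::nat)" and c2: "\<forall>x y. {x,y} \<in> E' \<longrightarrow> c x \<noteq> c y"
    unfolding colorable_def by blast
  define c' where "c' = c(a := 2, p := 2)"
  have ap: "a \<noteq> p" using a p by blast
  have ends: "\<And>x y. {x,y} \<in> E \<Longrightarrow> ({x,y} \<subseteq> set xs \<or> {x,y} \<subseteq> set ys)"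
    using edge_in_set[OF cx] edge_in_set[OF cy] EE by blast
  have "c' x \<noteq> c' y" if xy: "{x,y} \<in> E" for x y
  proof -
    have xyV: "x \<noteq> y" "x \<in> V" "y \<in> V" using edge_props[OF s xy] by auto
    have nap: "{x,y} \<noteq> {a,p}" using ends[OF xy] a p by blast
    show ?thesis
    proof (cases "x = a \<or> x = p \<or> y = a \<or> y = p")
      case False
      then have "{x,y} \<in> E'" using xy unfolding E'_def by auto
      then show ?thesis using c2 False unfolding c'_def by auto
    next
      case True
      then show ?thesis using xyV nap c1 ap unfolding c'_def
        by (auto simp: insert_commute)
    qed
  qed
  moreover have "\<forall>v\<in>V. c' v < 3" using c1 unfolding c'_def by auto
  ultimately show ?thesis unfolding colorable_def by blast
qed



lemma suff:
  assumes s: "simple_graph V E" and oc: "odd_cycles V E = {cyc_edges xs, cyc_edges ys}"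
    and EE: "E = cyc_edges xs \<union> cyc_edges ys"
    and cx: "cycle_list xs" and cy: "cycle_list ys"
    and sh: "\<forall>u v. u \<in> set xs \<inter> set ys \<longrightarrow> v \<in> set xs \<inter> set ys \<longrightarrow> u = v"
  shows "critical_3_2 V E"
proof -
  let ?P = "cyc_edges xs" and ?Q = "cyc_edges ys"
  have pE: "?P \<subseteq> E" unfolding EE by (rule Un_upper1)
  have qE: "?Q \<subseteq> E" unfolding EE by (rule Un_upper2)
  have dj: "?P \<inter> ?Q = {}" by (rule disj_share1[OF cx cy sh])
  have pn: "\<forall>e. ?P - {e} \<noteq> {}" by (intro allI) (rule cyc_two[OF cx])
  have qn: "\<forall>e. ?Q - {e} \<noteq> {}" by (intro allI) (rule cyc_two[OF cy])
  have qne: "?Q \<noteq> {}" "?P \<noteq> {}" using cyc_two[OF cy, of undefined] cyc_two[OF cx, of undefined] by blast+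
  have "chi V E \<le> 3" by (rule chi_le[OF col3[OF s oc EE cx cy sh]])
  moreover have "3 \<le> chi V E" by (rule chi_E3[OF s oc subset_refl]) (use pE in blast)
  ultimately have c3: "chi V E = 3" by simp
  have es2: "es_chi V E = 2" by (rule es_two[OF s oc pE qE dj pn qne(1) c3])
  have oc': "odd_cycles V E = {?Q, ?P}" unfolding oc by (rule insert_commute)
  have dj': "?Q \<inter> ?P = {}" using dj by blast
  have "es_chi V (E - {e}) < es_chi V E" if e: "e \<in> E" for e
  proof -
    have "e \<in> ?P \<or> e \<in> ?Q" using e EE by blast
    then have "es_chi V (E - {e}) \<le> 1"
    proof
      assume "e \<in> ?P"
      then show ?thesis by (rule es_drop[OF s oc pE qE dj pn qne(1) c3])
    next
      assume "e \<in> ?Q"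
      then show ?thesis by (rule es_drop[OF s oc' qE pE dj' qn qne(2) c3])
    qed
    then show ?thesis using es2 by simp
  qed
  then show ?thesis unfolding critical_3_2_def edge_stability_critical_def using c3 es2 by blast
qed

theorem theorem2p2:
  fixes V :: "'a set" and E :: "'a set set"
  assumes "simple_graph V E"
    and "no_isolated_vertices V E"
    and "card (odd_cycles V E) = 2"
  shows "critical_3_2 V E \<longleftrightarrow> (family_A V E \<or> family_B V E)"
proof -
  note s = assms(1)
  obtain P Q where PQ: "odd_cycles V E = {P,Q}" "P \<noteq> Q" using assms(3) unfolding card_2_iff by blast
  have "P \<in> odd_cycles V E" using PQ by blast
  then obtain xs where xs: "cycle_list xs" "odd (length xs)" "set xs \<subseteq> V" "P = cyc_edges xs" "P \<subseteq> E"
    unfolding odd_cycles_def by blast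
  have "Q \<in> odd_cycles V E" using PQ by blast
  then obtain ys where ys: "cycle_list ys" "odd (length ys)" "set ys \<subseteq> V" "Q = cyc_edges ys" "Q \<subseteq> E"
    unfolding odd_cycles_def by blast
  show ?thesis
  proof
    assume crit: "critical_3_2 V E"
    have c3: "chi V E = 3" and es2: "es_chi V E = 2" and esc: "\<forall>e\<in>E. es_chi V (E - {e}) < 2"
      using crit unfolding critical_3_2_def edge_stability_critical_def by auto
    have pn: "\<forall>e. P - {e} \<noteq> {}" using cyc_two[OF xs(1)] xs(4) by blast
    have qn: "\<forall>e. Q - {e} \<noteq> {}" using cyc_two[OF ys(1)] ys(4) by blast
    have qne: "Q \<noteq> {}" using qn by blast
    have dj: "P \<inter> Q = {}" by (rule disj_need[OF s PQ(1) xs(5) ys(5) pn c3 es2])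
    have "E \<subseteq> P \<union> Q" by (rule cover[OF s PQ(1) xs(5) ys(5) dj pn qne c3 esc])
    then have EE: "E = cyc_edges xs \<union> cyc_edges ys" using xs(4,5) ys(4,5) by blast
    have oc: "odd_cycles V E = {cyc_edges xs, cyc_edges ys}" using PQ(1) xs(4) ys(4) by simp
    have dj2: "cyc_edges xs \<inter> cyc_edges ys = {}" using dj xs(4) ys(4) by simp
    have sh: "\<forall>u v. u \<in> set xs \<inter> set ys \<longrightarrow> v \<in> set xs \<inter> set ys \<longrightarrow> u = v"
    proof (intro allI impI)
      fix u v assume u: "u \<in> set xs \<inter> set ys" and v: "v \<in> set xs \<inter> set ys"
      show "u = v"
      proof (rule ccontr)
        assume uv: "u \<noteq> v"
        have e1: "cyc_edges xs \<subseteq> E" using xs(4,5) by simp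
        have e2: "cyc_edges ys \<subseteq> E" using ys(4,5) by simp
        have "u \<in> set xs" "u \<in> set ys" "v \<in> set xs" "v \<in> set ys" using u v by auto
        from share[OF s oc e1 e2 xs(1) ys(1) xs(2) ys(2) xs(3) ys(3) dj2 this uv]
        show False .
      qed
    qed
    have VV: "V = set xs \<union> set ys"
    proof
      show "V \<subseteq> set xs \<union> set ys"
      proof
        fix v assume "v \<in> V"
        then obtain e where e: "e \<in> E" "v \<in> e" using assms(2) unfolding no_isolated_vertices_def by blast
        then have "e \<in> cyc_edges xs \<or> e \<in> cyc_edges ys" using EE by blast
        then show "v \<in> set xs \<union> set ys" using edge_in_set[OF xs(1)] edge_in_set[OF ys(1)] e(2) by blast
      qed
      show "set xs \<union> set ys \<subseteq> V" using xs(3) ys(3) by blast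
    qed
    show "family_A V E \<or> family_B V E"
    proof (cases "set xs \<inter> set ys = {}")
      case True
      have "family_A V E" unfolding family_A_def
        by (rule exI[of _ xs], rule exI[of _ ys]) (use xs(1,2) ys(1,2) VV EE True in simp)
      then show ?thesis by blast
    next
      case False
      then obtain x where x: "x \<in> set xs \<inter> set ys" by blast
      have "set xs \<inter> set ys = {x}"
      proof
        show "set xs \<inter> set ys \<subseteq> {x}" using sh x by blast
        show "{x} \<subseteq> set xs \<inter> set ys" using x by blast
      qed
      then have "family_B V E" unfolding family_B_def
        by (intro exI[of _ xs] exI[of _ ys] exI[of _ x]) (use xs(1,2) ys(1,2) VV EE in simp)
      then show ?thesis by blast
    qed
  next
    assume fam: "family_A V E \<or> family_B V E"
    have "\<exists>as bs. cycle_list as \<and> cycle_list bs \<and> odd (length as) \<and> odd (length bs)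
      \<and> (\<forall>u v. u \<in> set as \<inter> set bs \<longrightarrow> v \<in> set as \<inter> set bs \<longrightarrow> u = v)
      \<and> V = set as \<union> set bs \<and> E = cyc_edges as \<union> cyc_edges bs"
    proof (cases "family_A V E")
      case True
      then obtain as bs where h: "cycle_list as" "cycle_list bs" "odd (length as)" "odd (length bs)"
        "set as \<inter> set bs = {}" "V = set as \<union> set bs" "E = cyc_edges as \<union> cyc_edges bs"
        unfolding family_A_def by blast
      have "\<forall>u v. u \<in> set as \<inter> set bs \<longrightarrow> v \<in> set as \<inter> set bs \<longrightarrow> u = v" using h(5) by simp
      then show ?thesis using h by blast
    next
      case False
      then have "family_B V E" using fam by simp
      then obtain as bs x where h: "cycle_list as" "cycle_list bs" "odd (length as)" "odd (length bs)"
        "set as \<inter> set bs = {x}" "V = set as \<union> set bs" "E = cyc_edges as \<union> cyc_edges bs"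
        unfolding family_B_def by blast
      have "\<forall>u v. u \<in> set as \<inter> set bs \<longrightarrow> v \<in> set as \<inter> set bs \<longrightarrow> u = v" using h(5) by simp
      then show ?thesis using h by blast
    qed
    then obtain as bs where ab: "cycle_list as" "cycle_list bs" "odd (length as)" "odd (length bs)"
      "\<forall>u v. u \<in> set as \<inter> set bs \<longrightarrow> v \<in> set as \<inter> set bs \<longrightarrow> u = v"
      "V = set as \<union> set bs" "E = cyc_edges as \<union> cyc_edges bs" by blast
    have dj: "cyc_edges as \<inter> cyc_edges bs = {}" by (rule disj_share1[OF ab(1,2,5)])
    have ne: "cyc_edges as \<noteq> {}" using cyc_two[OF ab(1)] by blast
    have neq: "cyc_edges as \<noteq> cyc_edges bs" using dj ne by blast
    have m1: "cyc_edges as \<in> odd_cycles V E" unfolding odd_cycles_def using ab by blast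
    have m2: "cyc_edges bs \<in> odd_cycles V E" unfolding odd_cycles_def using ab by blast
    have fin: "finite (odd_cycles V E)" by (rule card_ge_0_finite) (simp add: assms(3))
    have "{cyc_edges as, cyc_edges bs} = odd_cycles V E"
    proof (rule card_subset_eq[OF fin])
      show "{cyc_edges as, cyc_edges bs} \<subseteq> odd_cycles V E" using m1 m2 by blast
      show "card {cyc_edges as, cyc_edges bs} = card (odd_cycles V E)" using neq assms(3) by simp
    qed
    then have oc: "odd_cycles V E = {cyc_edges as, cyc_edges bs}" by simp
    show "critical_3_2 V E" by (rule suff[OF s oc ab(7) ab(1,2,5)])
  qed
qed


end
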